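(* Let $G$ be a finite simple $P_4$-free graph (i.e. $G$ has no induced subgraph isomorphic to the path on four vertices) with $n$ vertices, and let $D$ be a dominating set of $G$ of minimum cardinality $\gamma(G)$. Then $$n-\gamma(G)\le \mathcal{C}_D(G)\le 2n-\gamma(G).$$
   Context: A set $D\subseteq V(G)$ is a dominating set of $G$ if every vertex of $V(G)\setminus D$ has a neighbor in $D$; $\gamma(G)$ is the minimum cardinality of a dominating set. For $D\subseteq V(G)$, $\mathcal{C}_D(G)=\sum_{u\in D}\deg_G(u)$. *)

theory Defs
  imports Main
begin

definition simple_graph :: "'a set \<Rightarrow> ('a \<Rightarrow> 'a \<Rightarrow> bool) \<Rightarrow> bool" where
  "simple_graph V E \<longleftrightarrow> finite V \<and> (\<forall>u v. E u v \<longrightarrow> E v u)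
     \<and> (\<forall>v. \<not> E v v) \<and> (\<forall>u v. E u v \<longrightarrow> u \<in> V \<and> v \<in> V)"

definition degree :: "'a set \<Rightarrow> ('a \<Rightarrow> 'a \<Rightarrow> bool) \<Rightarrow> 'a \<Rightarrow> nat" where
  "degree V E v = card {u \<in> V. E v u}"

definition P4_free :: "'a set \<Rightarrow> ('a \<Rightarrow> 'a \<Rightarrow> bool) \<Rightarrow> bool" where
  "P4_free V E \<longleftrightarrow> \<not> (\<exists>a\<in>V. \<exists>b\<in>V. \<exists>c\<in>V. \<exists>d\<in>V.
     distinct [a, b, c, d] \<and> E a b \<and> E b c \<and> E c d
     \<and> \<not> E a c \<and> \<not> E b d \<and> \<not> E a d)"

definition dominating_set :: "'a set \<Rightarrow> ('a \<Rightarrow> 'a \<Rightarrow> bool) \<Rightarrow> 'a set \<Rightarrow> bool" where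
  "dominating_set V E D \<longleftrightarrow> D \<subseteq> V \<and> (\<forall>v \<in> V - D. \<exists>u \<in> D. E v u)"

definition domination_number :: "'a set \<Rightarrow> ('a \<Rightarrow> 'a \<Rightarrow> bool) \<Rightarrow> nat" where
  "domination_number V E = (LEAST k. \<exists>D. dominating_set V E D \<and> card D = k)"

definition degree_sum :: "'a set \<Rightarrow> ('a \<Rightarrow> 'a \<Rightarrow> bool) \<Rightarrow> 'a set \<Rightarrow> nat" where
  "degree_sum V E D = (\<Sum>u\<in>D. degree V E u)"

end

theory Submission
  imports Defs
begin

lemma chain_p4:
  assumes sg: "simple_graph V E" and pf: "P4_free V E"
    and "E v x" "E v y" "\<not> E v a" "a \<noteq> v" "\<not> E v b" "b \<noteq> v"
    and "E x a" "\<not> E y a" "E y b" "\<not> E x b"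
  shows False
proof -
  have sym: "\<And>u w. E u w \<Longrightarrow> E w u" and irr: "\<And>u. \<not> E u u"
    and inV: "\<And>u w. E u w \<Longrightarrow> u \<in> V \<and> w \<in> V"
    using sg unfolding simple_graph_def by blast+
  have np: "\<not> (distinct [p, q, r, s] \<and> E p q \<and> E q r \<and> E r s
     \<and> \<not> E p r \<and> \<not> E q s \<and> \<not> E p s)" if "p \<in> V" "q \<in> V" "r \<in> V" "s \<in> V" for p q r s
    using pf that unfolding P4_free_def by blast
  have V: "v \<in> V" "x \<in> V" "y \<in> V" "a \<in> V" "b \<in> V" using inV assms by blast+
  have s1: "E a x" "E b y" "\<not> E a y" "\<not> E a v" "E x v" "\<not> E b x"
    using sym[of x a] sym[of y b] sym[of a y] sym[of a v] sym[of v x] sym[of b x] assms by blast+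
  have i: "\<not> E v v" "\<not> E x x" "\<not> E a a" "\<not> E b b" "\<not> E y y" using irr by blast+
  show False
  proof (cases "E a b")
    case True
    show False
    proof (cases "E x y")
      case True
      then show False using np[of v x a b] V assms \<open>E a b\<close> s1 i by auto
    next
      case False
      then show False using np[of x a b y] V assms \<open>E a b\<close> s1 i by auto
    qed
  next
    case False
    show False
    proof (cases "E x y")
      case True
      then show False using np[of a x y b] V assms \<open>\<not> E a b\<close> s1 i by auto
    next
      case False
      then show False using np[of a x v y] V assms \<open>\<not> E a b\<close> s1 i by auto
    qed
  qed
qed

lemma key:
  assumes sg: "simple_graph V E" and pf: "P4_free V E"
    and dom: "dominating_set V E D" and mn: "card D = domination_number V E"
    and vV: "v \<in> V"
    and dD: "d1 \<in> D" "d2 \<in> D" "d3 \<in> D" and dist: "d1 \<noteq> d2" "d2 \<noteq> d3" "d1 \<noteq> d3"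
    and adj: "d1 = v \<or> E v d1" "d2 = v \<or> E v d2" "d3 = v \<or> E v d3"
  shows False
proof -
  have sym: "\<And>u w. E u w \<Longrightarrow> E w u" and irr: "\<And>u. \<not> E u u"
    and inV: "\<And>u w. E u w \<Longrightarrow> u \<in> V \<and> w \<in> V" and finV: "finite V"
    using sg unfolding simple_graph_def by blast+
  have DV: "D \<subseteq> V" using dom unfolding dominating_set_def by blast
  have finD: "finite D" using DV finV finite_subset by blast
  define T where "T = {d1, d2, d3}"
  define A where "A = {a \<in> V. a \<noteq> v \<and> \<not> E v a \<and> (\<exists>d\<in>T. a = d \<or> E d a)}"
  define C where "C = {x \<in> V. E v x}"
  have finA: "finite A" using finV unfolding A_def by simp
  have finC: "finite C" using finV unfolding C_def by simp
  have Anb: "\<exists>y\<in>C. E y a" if "a \<in> A" for a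
  proof -
    from that obtain d where d: "d \<in> T" "a = d \<or> E d a" "a \<noteq> v" "\<not> E v a" "a \<in> V"
      unfolding A_def by blast
    have "d = v \<or> E v d" using d(1) adj unfolding T_def by blast
    then have "E v d" "E d a" using d by auto
    then show ?thesis unfolding C_def using inV by blast
  qed
  obtain x where xC: "x \<in> V" and xA: "\<forall>a\<in>A. E x a" and xv: "x = v \<or> E v x"
  proof (cases "A = {}")
    case True
    then show ?thesis using that[of v] vV by blast
  next
    case False
    then obtain a0 where "a0 \<in> A" by blast
    then have Cne: "C \<noteq> {}" using Anb by blast
    define g where "g = (\<lambda>x. card {a \<in> A. E x a})"
    define m where "m = Max (g ` C)"
    have "m \<in> g ` C" unfolding m_def using Cne finC by simp
    then obtain x where x: "x \<in> C" "g x = m" by blast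
    have mx: "g y \<le> g x" if "y \<in> C" for y using x that finC unfolding m_def by simp
    have "E x a" if aA: "a \<in> A" for a
    proof (rule ccontr)
      assume nxa: "\<not> E x a"
      obtain y where y: "y \<in> C" "E y a" using Anb aA by blast
      have sub: "{b \<in> A. E x b} \<subseteq> {b \<in> A. E y b}"
      proof
        fix b assume b: "b \<in> {b \<in> A. E x b}"
        show "b \<in> {b \<in> A. E y b}"
        proof (rule ccontr)
          assume "b \<notin> {b \<in> A. E y b}"
          then have "\<not> E y b" using b by blast
          then show False
            using chain_p4[OF sg pf, of v y x a b] x(1) y aA b nxa
            unfolding C_def A_def by blast
        qed
      qed
      have "a \<in> {b \<in> A. E y b}" "a \<notin> {b \<in> A. E x b}" using aA y nxa by auto
      then have "{b \<in> A. E x b} \<subset> {b \<in> A. E y b}" using sub by blast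
      then have "g x < g y" unfolding g_def using finA by (simp add: psubset_card_mono)
      then show False using mx[OF y(1)] by simp
    qed
    then show ?thesis using that[of x] x(1) unfolding C_def by blast
  qed
  define D' where "D' = (D - T) \<union> {v, x}"
  have TD: "T \<subseteq> D" using dD unfolding T_def by blast
  have cT: "card T = 3" using dist unfolding T_def by simp
  have "card D' \<le> card (D - T) + card {v, x}" unfolding D'_def by (rule card_Un_le)
  also have "card {v, x} \<le> 2" by (simp add: card_insert_le_m1)
  moreover have "card (D - T) = card D - 3" using card_Diff_subset[OF _ TD] cT finD finite_subset TD by metis
  moreover have "card D \<ge> 3" using card_mono[OF finD TD] cT by simp
  ultimately have cD': "card D' < card D" by linarith
  have domD': "dominating_set V E D'"
    unfolding dominating_set_def
  proof (intro conjI ballI)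
    show "D' \<subseteq> V" unfolding D'_def using DV vV xC by blast
  next
    fix y assume y: "y \<in> V - D'"
    show "\<exists>u\<in>D'. E y u"
    proof (cases "\<exists>u\<in>D - T. E y u")
      case True
      then show ?thesis unfolding D'_def by blast
    next
      case nT: False
      have yS: "\<exists>d\<in>T. y = d \<or> E d y"
      proof (cases "y \<in> D")
        case True
        then show ?thesis using y unfolding D'_def by blast
      next
        case False
        then obtain u where "u \<in> D" "E y u" using dom y unfolding dominating_set_def by blast
        then show ?thesis using nT sym[of y u] by blast
      qed
      show ?thesis
      proof (cases "E v y")
        case True
        then show ?thesis using sym[OF True] unfolding D'_def by blast
      next
        case False
        have "y \<noteq> v" using y unfolding D'_def by blast
        then have "y \<in> A" unfolding A_def using False y yS by blast
        then have "E y x" using xA sym[of x y] by blast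
        then show ?thesis unfolding D'_def by blast
      qed
    qed
  qed
  have "domination_number V E \<le> card D'"
    unfolding domination_number_def by (rule Least_le) (use domD' in blast)
  then show False using cD' mn by simp
qed

lemma three_elems:
  assumes "finite S" "3 \<le> card S"
  obtains a b c where "a \<in> S" "b \<in> S" "c \<in> S" "a \<noteq> b" "b \<noteq> c" "a \<noteq> c"
proof -
  obtain T where "T \<subseteq> S" "card T = 3" using obtain_subset_with_card_n[OF assms(2)] by blast
  then obtain a b c where "T = {a, b, c}" "a \<noteq> b" "b \<noteq> c" "a \<noteq> c"
    using card_3_iff[of T] by blast
  then show ?thesis using that \<open>T \<subseteq> S\<close> by blast
qed

lemma dcount:
  assumes "finite V" "finite D"
  shows "(\<Sum>u\<in>D. card {w\<in>V. P u w}) = (\<Sum>w\<in>V. card {u\<in>D. P u w})"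
proof -
  have "(\<Sum>u\<in>D. card {w\<in>V. P u w}) = (\<Sum>u\<in>D. \<Sum>w\<in>V. if P u w then 1 else 0)"
    using assms by (simp add: sum.inter_filter[symmetric])
  also have "\<dots> = (\<Sum>w\<in>V. \<Sum>u\<in>D. if P u w then 1 else 0)" by (rule sum.swap)
  also have "\<dots> = (\<Sum>w\<in>V. card {u\<in>D. P u w})"
    using assms by (simp add: sum.inter_filter[symmetric])
  finally show ?thesis .
qed

theorem mainTheorem5:
  fixes V :: "'a set" and E :: "'a \<Rightarrow> 'a \<Rightarrow> bool" and D :: "'a set"
  assumes "simple_graph V E"
    and "P4_free V E"
    and "dominating_set V E D"
    and "card D = domination_number V E"
  shows "int (card V) - int (domination_number V E) \<le> int (degree_sum V E D)
     \<and> int (degree_sum V E D) \<le> 2 * int (card V) - int (domination_number V E)"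
proof -
  have sym: "\<And>u w. E u w \<Longrightarrow> E w u" and irr: "\<And>u. \<not> E u u"
    and finV: "finite V"
    using assms(1) unfolding simple_graph_def by blast+
  have DV: "D \<subseteq> V" using assms(3) unfolding dominating_set_def by blast
  have finD: "finite D" using DV finV finite_subset by blast
  define f where "f = (\<lambda>w. card {u\<in>D. E u w})"
  have ds: "degree_sum V E D = (\<Sum>w\<in>V. f w)"
    unfolding degree_sum_def degree_def f_def using dcount[OF finV finD, of E] by simp
  have low: "1 \<le> f w" if wVD: "w \<in> V - D" for w
  proof -
    obtain u where "u \<in> D" "E w u" using assms(3) wVD unfolding dominating_set_def by blast
    then have "u \<in> {u\<in>D. E u w}" using sym[of w u] by blast
    then have "0 < card {u\<in>D. E u w}" using finD by (auto simp: card_gt_0_iff)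
    then show ?thesis unfolding f_def by simp
  qed
  have up: "f w + (if w \<in> D then 1 else 0) \<le> 2" if wV: "w \<in> V" for w
  proof (rule ccontr)
    assume "\<not> ?thesis"
    define S where "S = {u\<in>D. u = w \<or> E u w}"
    have cS: "card S = f w + (if w \<in> D then 1 else 0)"
    proof (cases "w \<in> D")
      case True
      then have "S = insert w {u\<in>D. E u w}" unfolding S_def by blast
      moreover have "w \<notin> {u\<in>D. E u w}" using irr[of w] by blast
      moreover have "finite {u\<in>D. E u w}" using finD by simp
      ultimately show ?thesis using True unfolding f_def by simp
    next
      case False
      then have "S = {u\<in>D. E u w}" unfolding S_def by blast
      then show ?thesis using False unfolding f_def by simp
    qed
    have "3 \<le> card S" using cS \<open>\<not> (f w + (if w \<in> D then 1 else 0) \<le> 2)\<close> by linarith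
    moreover have "finite S" using finD unfolding S_def by simp
    ultimately obtain a b c where abc: "a \<in> S" "b \<in> S" "c \<in> S" "a \<noteq> b" "b \<noteq> c" "a \<noteq> c"
      using three_elems by blast
    have "a \<in> D" "b \<in> D" "c \<in> D" "a = w \<or> E w a" "b = w \<or> E w b" "c = w \<or> E w c"
      using abc sym[of a w] sym[of b w] sym[of c w] unfolding S_def by blast+
    then show False
      using key[OF assms wV, of a b c] abc by blast
  qed
  have cVD: "card (V - D) = card V - card D" using card_Diff_subset[OF finD DV] .
  have cDV: "card D \<le> card V" using card_mono[OF finV DV] .
  have "card (V - D) \<le> (\<Sum>w\<in>V - D. f w)"
    using low sum_mono[of "V - D" "\<lambda>_. 1" f] by simp
  also have "\<dots> \<le> (\<Sum>w\<in>V. f w)" using finV by (intro sum_mono2) auto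
  finally have L: "card V - card D \<le> degree_sum V E D" using ds cVD by simp
  have "(\<Sum>w\<in>V. f w) + card D = (\<Sum>w\<in>V. f w) + (\<Sum>w\<in>V. if w \<in> D then 1 else 0)"
  proof -
    have "(\<Sum>w\<in>V. if w \<in> D then 1 else 0) = card {w\<in>V. w \<in> D}"
      using finV by (simp add: sum.inter_filter[symmetric])
    also have "{w\<in>V. w \<in> D} = D" using DV by blast
    finally show ?thesis by simp
  qed
  also have "\<dots> = (\<Sum>w\<in>V. f w + (if w \<in> D then 1 else 0))" by (simp add: sum.distrib)
  also have "\<dots> \<le> (\<Sum>w\<in>V. 2)" using up by (intro sum_mono) auto
  finally have U: "degree_sum V E D + card D \<le> 2 * card V" using ds by simp
  show ?thesis using L U cDV assms(4) by linarith
qed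

end
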